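(* Let $X$ be a Hausdorff space. Assume that there is a closed subset $F\subset X$ such that (a) both $F$ and $X-F$ are totally disconnected, and (b) the quotient space $X/F$ (obtained by collapsing $F$ to a single point) is hereditarily disconnected. Then $\mathcal{K}(X)$ is hereditarily disconnected.
   Context: For a $T_1$ space $X$, $\mathcal{K}(X)$ denotes the set of nonempty compact subsets of $X$ with the Vietoris topology, i.e. the topology generated by the sets $U^+=\{A: A\subset U\}$ and $U^-=\{A: A\cap U\neq\emptyset\}$ for $U$ open in $X$. A space is totally disconnected if for any two distinct points $x,y$ there is a clopen set containing $x$ but not $y$. A space is hereditarily disconnected if every nonempty connected subset is a singleton. *)

theory Defs
  imports "HOL-Analysis.Analysis"
begin

definition totally_disconnected_space :: "'a topology \<Rightarrow> bool" where
  "totally_disconnected_space X \<longleftrightarrow>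
     (\<forall>x\<in>topspace X. \<forall>y\<in>topspace X. x \<noteq> y \<longrightarrow>
        (\<exists>C. openin X C \<and> closedin X C \<and> x \<in> C \<and> y \<notin> C))"

definition hereditarily_disconnected_space :: "'a topology \<Rightarrow> bool" where
  "hereditarily_disconnected_space X \<longleftrightarrow>
     (\<forall>S. connectedin X S \<and> S \<noteq> {} \<longrightarrow> (\<exists>a. S = {a}))"

definition quotient_topology :: "'a topology \<Rightarrow> ('a \<Rightarrow> 'b) \<Rightarrow> 'b topology" where
  "quotient_topology X q =
     topology (\<lambda>U. U \<subseteq> q ` topspace X \<and> openin X {x \<in> topspace X. q x \<in> U})"

definition collapse_map :: "'a set \<Rightarrow> 'a \<Rightarrow> 'a set" where
  "collapse_map F x = (if x \<in> F then F else {x})"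

definition collapse_space :: "'a topology \<Rightarrow> 'a set \<Rightarrow> 'a set topology" where
  "collapse_space X F = quotient_topology X (collapse_map F)"

definition vietoris_compacts :: "'a topology \<Rightarrow> 'a set topology" where
  "vietoris_compacts X =
     subtopology
       (topology_generated_by
          ({{A. A \<subseteq> U} | U. openin X U} \<union> {{A. A \<inter> U \<noteq> {}} | U. openin X U}))
       {K. compactin X K \<and> K \<noteq> {}}"

end

theory Submission
  imports Defs
begin

lemma quot_open:
  "openin (quotient_topology X q) U \<longleftrightarrow> U \<subseteq> q ` topspace X \<and> openin X {x \<in> topspace X. q x \<in> U}"
proof -
  have "istopology (\<lambda>U. U \<subseteq> q ` topspace X \<and> openin X {x \<in> topspace X. q x \<in> U})"
    unfolding istopology_def
  proof (rule conjI; intro allI impI)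
    fix S T assume "S \<subseteq> q ` topspace X \<and> openin X {x \<in> topspace X. q x \<in> S}"
      "T \<subseteq> q ` topspace X \<and> openin X {x \<in> topspace X. q x \<in> T}"
    moreover have "{x \<in> topspace X. q x \<in> S \<inter> T} = {x \<in> topspace X. q x \<in> S} \<inter> {x \<in> topspace X. q x \<in> T}" by auto
    ultimately show "S \<inter> T \<subseteq> q ` topspace X \<and> openin X {x \<in> topspace X. q x \<in> S \<inter> T}" by auto
  next
    fix K assume K: "\<forall>S\<in>K. S \<subseteq> q ` topspace X \<and> openin X {x \<in> topspace X. q x \<in> S}"
    have "{x \<in> topspace X. q x \<in> \<Union>K} = \<Union>((\<lambda>S. {x \<in> topspace X. q x \<in> S}) ` K)" by auto
    moreover have "openin X (\<Union>((\<lambda>S. {x \<in> topspace X. q x \<in> S}) ` K))" using K by auto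
    ultimately show "\<Union>K \<subseteq> q ` topspace X \<and> openin X {x \<in> topspace X. q x \<in> \<Union>K}" using K by auto
  qed
  then show ?thesis unfolding quotient_topology_def by simp
qed

lemma quot_topspace: "topspace (quotient_topology X q) = q ` topspace X"
proof -
  have "openin (quotient_topology X q) (q ` topspace X)"
  proof -
    have "{x \<in> topspace X. q x \<in> q ` topspace X} = topspace X" by auto
    then show ?thesis unfolding quot_open by simp
  qed
  moreover have "U \<subseteq> q ` topspace X" if "openin (quotient_topology X q) U" for U
    using that unfolding quot_open by auto
  ultimately show ?thesis by (metis openin_subset subset_antisym openin_topspace)
qed

definition Kc where "Kc X = {K. compactin X K \<and> K \<noteq> {}}"

lemma viet_topspace: "topspace (vietoris_compacts X) = Kc X"
proof -
  let ?S = "{{A. A \<subseteq> U} | U. openin X U} \<union> {{A. A \<inter> U \<noteq> {}} | U. openin X U}"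
  have m: "K \<in> \<Union>?S" if "compactin X K" for K
  proof -
    have "{A. A \<subseteq> topspace X} \<in> ?S" by blast
    moreover have "K \<in> {A. A \<subseteq> topspace X}" using compactin_subset_topspace[OF that] by simp
    ultimately show ?thesis by (rule UnionI)
  qed
  have "topspace (vietoris_compacts X) = \<Union>?S \<inter> {K. compactin X K \<and> K \<noteq> {}}"
    unfolding vietoris_compacts_def topspace_subtopology topology_generated_by_topspace ..
  also have "\<dots> = Kc X" unfolding Kc_def using m by blast
  finally show ?thesis .
qed

lemma viet_upper: assumes "openin X U"
  shows "openin (vietoris_compacts X) {A \<in> Kc X. A \<subseteq> U}"
proof -
  let ?S = "{{A. A \<subseteq> U} | U. openin X U} \<union> {{A. A \<inter> U \<noteq> {}} | U. openin X U}"
  have "{A. A \<subseteq> U} \<in> ?S" using assms by blast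
  then have "openin (topology_generated_by ?S) {A. A \<subseteq> U}" by (rule topology_generated_by_Basis)
  moreover have "{A \<in> Kc X. A \<subseteq> U} = {A. A \<subseteq> U} \<inter> {K. compactin X K \<and> K \<noteq> {}}"
    unfolding Kc_def by blast
  ultimately show ?thesis unfolding vietoris_compacts_def openin_subtopology by blast
qed

lemma viet_lower: assumes "openin X U"
  shows "openin (vietoris_compacts X) {A \<in> Kc X. A \<inter> U \<noteq> {}}"
proof -
  let ?S = "{{A. A \<subseteq> U} | U. openin X U} \<union> {{A. A \<inter> U \<noteq> {}} | U. openin X U}"
  have "{A. A \<inter> U \<noteq> {}} \<in> ?S" using assms by blast
  then have "openin (topology_generated_by ?S) {A. A \<inter> U \<noteq> {}}" by (rule topology_generated_by_Basis)
  moreover have "{A \<in> Kc X. A \<inter> U \<noteq> {}} = {A. A \<inter> U \<noteq> {}} \<inter> {K. compactin X K \<and> K \<noteq> {}}"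
    unfolding Kc_def by blast
  ultimately show ?thesis unfolding vietoris_compacts_def openin_subtopology by blast
qed

lemma td_sep:
  assumes td: "totally_disconnected_space Z" and L: "compactin Z L"
    and x: "x \<in> topspace Z" "x \<notin> L"
  shows "\<exists>W. openin Z W \<and> closedin Z W \<and> L \<subseteq> W \<and> x \<notin> W"
proof -
  have Lt: "L \<subseteq> topspace Z" using L compactin_subset_topspace by blast
  have "\<forall>y\<in>L. \<exists>C. openin Z C \<and> closedin Z C \<and> y \<in> C \<and> x \<notin> C"
  proof
    fix y assume y: "y \<in> L"
    then have "y \<in> topspace Z" "y \<noteq> x" using Lt x by auto
    then show "\<exists>C. openin Z C \<and> closedin Z C \<and> y \<in> C \<and> x \<notin> C"
      using td x(1) unfolding totally_disconnected_space_def by blast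
  qed
  then obtain C where C: "\<And>y. y \<in> L \<Longrightarrow> openin Z (C y) \<and> closedin Z (C y) \<and> y \<in> C y \<and> x \<notin> C y"
    by metis
  have o: "\<forall>U \<in> C ` L. openin Z U" using C by blast
  have cov: "L \<subseteq> \<Union>(C ` L)" using C by blast
  have "\<exists>\<F>. finite \<F> \<and> \<F> \<subseteq> C ` L \<and> L \<subseteq> \<Union>\<F>"
    using L o cov unfolding compactin_def by blast
  then obtain \<F> where F: "finite \<F>" "\<F> \<subseteq> C ` L" "L \<subseteq> \<Union>\<F>" by blast
  have Fo: "\<And>U. U \<in> \<F> \<Longrightarrow> openin Z U" using F(2) C by blast
  have Fc: "\<And>U. U \<in> \<F> \<Longrightarrow> closedin Z U" using F(2) C by blast
  have Fx: "\<And>U. U \<in> \<F> \<Longrightarrow> x \<notin> U" using F(2) C by blast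
  have "openin Z (\<Union>\<F>)" using Fo by (rule openin_Union)
  moreover have "closedin Z (\<Union>\<F>)" using F(1) Fc by (rule closedin_Union)
  moreover have "x \<notin> \<Union>\<F>" using Fx by blast
  ultimately show ?thesis using F(3) by blast
qed

lemma conn_split:
  assumes "connectedin T C" "openin T U1" "openin T U2" "C \<subseteq> U1 \<union> U2"
    "U1 \<inter> U2 \<inter> C = {}" "U1 \<inter> C \<noteq> {}" "U2 \<inter> C \<noteq> {}"
  shows False
  using assms unfolding connectedin by blast

lemma step1a:
  assumes H: "Hausdorff_space X" and Fc: "closedin X F"
    and tdc: "totally_disconnected_space (subtopology X (topspace X - F))"
    and conn: "connectedin (vietoris_compacts X) \<C>" and B0: "B0 \<in> \<C>"
    and T_def: "T = F \<union> (\<Union>\<C> - B0)"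
    and Oo: "openin X G0" and clos: "X closure_of (T \<inter> G0) \<inter> T \<subseteq> T \<inter> G0"
    and disj: "T \<inter> G0 \<inter> F = {}"
  shows "T \<inter> G0 = {}"
proof (rule ccontr)
  assume "T \<inter> G0 \<noteq> {}"
  then obtain q0 where q0: "q0 \<in> T" "q0 \<in> G0" by blast
  define Q where "Q = T \<inter> G0"
  have CK: "\<C> \<subseteq> Kc X" using conn connectedin_subset_topspace viet_topspace by metis
  then have Ccomp: "\<And>A. A \<in> \<C> \<Longrightarrow> compactin X A" unfolding Kc_def by auto
  have Ctop: "\<And>A. A \<in> \<C> \<Longrightarrow> A \<subseteq> topspace X" using Ccomp compactin_subset_topspace by blast
  have B0c: "closedin X B0" using H Ccomp[OF B0] compactin_imp_closedin by blast
  have Ftop: "F \<subseteq> topspace X" using Fc closedin_subset by blast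
  have Ttop: "T \<subseteq> topspace X" using Ftop Ctop T_def by blast
  have q0F: "q0 \<notin> F" using q0 disj by blast
  have q0B: "q0 \<notin> B0" "q0 \<in> \<Union>\<C>" using q0 q0F T_def by auto
  define cQ where "cQ = X closure_of Q"
  have cQF: "cQ \<inter> F = {}" using clos disj T_def unfolding cQ_def Q_def by blast
  define L where "L = cQ \<inter> B0"
  have Lc: "compactin X L" unfolding L_def cQ_def
    by (rule closed_Int_compactin[OF closedin_closure_of Ccomp[OF B0]])
  define Z where "Z = subtopology X (topspace X - F)"
  have "L \<subseteq> cQ" unfolding L_def by blast
  moreover have "cQ \<subseteq> topspace X" unfolding cQ_def by (rule closure_of_subset_topspace)
  ultimately have LsubZ: "L \<subseteq> topspace X - F" using cQF by blast
  have LZ: "compactin Z L" unfolding Z_def compactin_subtopology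
    using Lc LsubZ by simp
  have q0Z: "q0 \<in> topspace Z" unfolding Z_def using q0 q0F Ttop by auto
  have q0L: "q0 \<notin> L" unfolding L_def using q0B by blast
  obtain W where W: "openin Z W" "closedin Z W" "L \<subseteq> W" "q0 \<notin> W"
    using td_sep[OF tdc[folded Z_def] LZ q0Z q0L] by blast
  define V where "V = topspace Z - W"
  have openXF: "openin X (topspace X - F)" using Fc by blast
  have VZ: "openin Z V" using W(2) unfolding V_def by blast
  then have VX: "openin X V" using openXF openin_trans_full unfolding Z_def by blast
  have VcZ: "closedin Z V" using W(1) unfolding V_def by blast
  have Vsub: "V \<subseteq> topspace X - F" unfolding V_def Z_def by auto
  have q0V: "q0 \<in> V" unfolding V_def using q0Z W(4) by blast
  have VL: "V \<inter> L = {}" unfolding V_def using W(3) by blast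
  have clV: "X closure_of V \<subseteq> V \<union> F"
  proof -
    obtain C where C: "closedin X C" "V = C \<inter> (topspace X - F)"
      using VcZ unfolding Z_def closedin_subtopology by blast
    have c1: "X closure_of V \<subseteq> C" using C by (intro closure_of_minimal) auto
    have c2: "X closure_of V \<subseteq> topspace X" by (rule closure_of_subset_topspace)
    show ?thesis
    proof
      fix z assume "z \<in> X closure_of V"
      then have "z \<in> C" "z \<in> topspace X" using c1 c2 by auto
      then have "z \<in> C \<inter> (topspace X - F) \<or> z \<in> F" by blast
      then show "z \<in> V \<union> F" using C(2) by blast
    qed
  qed
  define Gp where "Gp = G0 \<inter> V"
  define Q' where "Q' = Q \<inter> V"
  have GpX: "openin X Gp" unfolding Gp_def using Oo VX by blast
  define cQ' where "cQ' = X closure_of Q'"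
  have cQ'1: "cQ' \<subseteq> cQ" unfolding cQ'_def cQ_def Q'_def by (intro closure_of_mono) blast
  have cQ'2: "cQ' \<subseteq> V \<union> F" unfolding cQ'_def Q'_def
    using closure_of_mono[of "Q \<inter> V" V X] clV by blast
  have cQ'3: "cQ' \<subseteq> cQ \<inter> V" using cQ'1 cQ'2 cQF by blast
  have cQ'B: "cQ' \<inter> B0 = {}" using cQ'3 VL unfolding L_def by blast
  have cQ'T: "cQ' \<inter> T \<subseteq> Q'" using cQ'3 clos unfolding cQ_def Q_def Q'_def by blast
  have Q'sub: "Q' \<subseteq> cQ'" unfolding cQ'_def Q'_def Q_def
    by (rule closure_of_subset) (use Ttop in blast)
  define U1 where "U1 = {A \<in> Kc X. A \<inter> (Gp - B0) \<noteq> {}}"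
  define U2 where "U2 = {A \<in> Kc X. A \<subseteq> topspace X - cQ'}"
  have U1o: "openin (vietoris_compacts X) U1" unfolding U1_def
    by (rule viet_lower) (use GpX B0c in blast)
  have U2o: "openin (vietoris_compacts X) U2" unfolding U2_def
    by (rule viet_upper) (auto simp: cQ'_def)
  show False
  proof (rule conn_split[OF conn U1o U2o])
    show "\<C> \<subseteq> U1 \<union> U2"
    proof
      fix A assume A: "A \<in> \<C>"
      show "A \<in> U1 \<union> U2"
      proof (cases "A \<inter> cQ' = {}")
        case True
        then show ?thesis using A CK Ctop[OF A] unfolding U2_def by blast
      next
        case False
        then obtain z where z: "z \<in> A" "z \<in> cQ'" by blast
        have "z \<notin> B0" using z cQ'B by blast
        then have "z \<in> T" using z A T_def by blast
        then have "z \<in> Q'" using z cQ'T by blast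
        then have "z \<in> Gp" unfolding Q'_def Q_def Gp_def by blast
        then show ?thesis using A CK z \<open>z \<notin> B0\<close> unfolding U1_def by blast
      qed
    qed
    show "U1 \<inter> U2 \<inter> \<C> = {}"
    proof (rule ccontr)
      assume "U1 \<inter> U2 \<inter> \<C> \<noteq> {}"
      then obtain A z where A: "A \<in> \<C>" "A \<subseteq> topspace X - cQ'" "z \<in> A" "z \<in> Gp" "z \<notin> B0"
        unfolding U1_def U2_def by blast
      then have "z \<in> T" using T_def by blast
      then have "z \<in> Q'" using A unfolding Q'_def Q_def Gp_def by blast
      then show False using A Q'sub by blast
    qed
    obtain A1 where A1: "A1 \<in> \<C>" "q0 \<in> A1" using q0B by blast
    have "q0 \<in> Gp" unfolding Gp_def using q0 q0V by blast
    then have "A1 \<in> U1" using A1 CK q0B unfolding U1_def by blast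
    then show "U1 \<inter> \<C> \<noteq> {}" using A1 by blast
    have "B0 \<in> U2" using B0 CK Ctop[OF B0] cQ'B unfolding U2_def by blast
    then show "U2 \<inter> \<C> \<noteq> {}" using B0 by blast
  qed
qed


lemma step1b:
  assumes H: "Hausdorff_space X" and Fc: "closedin X F"
    and tdc: "totally_disconnected_space (subtopology X (topspace X - F))"
    and hd: "hereditarily_disconnected_space (collapse_space X F)"
    and conn: "connectedin (vietoris_compacts X) \<C>" and B0: "B0 \<in> \<C>"
    and A: "A \<in> \<C>" and x: "x \<in> A" "x \<notin> F"
  shows "x \<in> B0"
proof (rule ccontr)
  assume xB: "x \<notin> B0"
  define T where "T = F \<union> (\<Union>\<C> - B0)"
  have xT: "x \<in> T" unfolding T_def using A x xB by blast
  have CK: "\<C> \<subseteq> Kc X" using conn connectedin_subset_topspace viet_topspace by metis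
  then have Ctop: "\<And>A. A \<in> \<C> \<Longrightarrow> A \<subseteq> topspace X" unfolding Kc_def
    using compactin_subset_topspace by blast
  have Ftop: "F \<subseteq> topspace X" using Fc closedin_subset by blast
  have Ttop: "T \<subseteq> topspace X" using Ftop Ctop T_def by blast
  note S1 = step1a[OF H Fc tdc conn B0 T_def]
  show False
  proof (cases "F = {}")
    case True
    have "T \<inter> topspace X = {}"
    proof (rule S1)
      show "X closure_of (T \<inter> topspace X) \<inter> T \<subseteq> T \<inter> topspace X"
        using closure_of_subset_topspace[of X "T \<inter> topspace X"] by blast
    qed (use True in auto)
    then show False using xT Ttop by blast
  next
    case False
    define q where "q = collapse_map F"
    define Y where "Y = collapse_space X F"
    have oY: "openin Y U \<longleftrightarrow> U \<subseteq> q ` topspace X \<and> openin X {x \<in> topspace X. q x \<in> U}" for U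
      unfolding Y_def collapse_space_def q_def by (rule quot_open)
    have tY: "topspace Y = q ` topspace X"
      unfolding Y_def collapse_space_def q_def by (rule quot_topspace)
    have qF: "\<And>f. f \<in> F \<Longrightarrow> q f = F" unfolding q_def collapse_map_def by simp
    have qx: "q x = {x}" unfolding q_def collapse_map_def using x by simp
    have key: "E' \<inter> q ` T = {}" if E: "openin Y E" "openin Y E'" "q ` T \<subseteq> E \<union> E'"
      "E \<inter> E' \<inter> q ` T = {}" "F \<notin> E'" for E E'
    proof -
      define G where "G = {x \<in> topspace X. q x \<in> E}"
      define G' where "G' = {x \<in> topspace X. q x \<in> E'}"
      have Go: "openin X G" "openin X G'" using E oY unfolding G_def G'_def by auto
      have "T \<inter> G' = {}"
      proof (rule S1)
        show "openin X G'" by (rule Go(2))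
        show "T \<inter> G' \<inter> F = {}" using qF E(5) unfolding G'_def by auto
        have sub: "T \<inter> G' \<subseteq> topspace X - G" using E(4) unfolding G_def G'_def by blast
        have "closedin X (topspace X - G)" using Go(1) by blast
        then have "X closure_of (T \<inter> G') \<subseteq> topspace X - G"
          using sub by (rule closure_of_minimal[rotated])
        then show "X closure_of (T \<inter> G') \<inter> T \<subseteq> T \<inter> G'"
          using E(3) Ttop unfolding G_def G'_def by blast
      qed
      then show ?thesis using Ttop unfolding G'_def by blast
    qed
    have connT: "connectedin Y (q ` T)"
      unfolding connectedin
    proof (intro conjI notI)
      show "q ` T \<subseteq> topspace Y" using tY Ttop by blast
    next
      assume "\<exists>E1 E2. openin Y E1 \<and> openin Y E2 \<and> q ` T \<subseteq> E1 \<union> E2 \<and>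
        E1 \<inter> E2 \<inter> q ` T = {} \<and> E1 \<inter> q ` T \<noteq> {} \<and> E2 \<inter> q ` T \<noteq> {}"
      then obtain E1 E2 where E: "openin Y E1" "openin Y E2" "q ` T \<subseteq> E1 \<union> E2"
        "E1 \<inter> E2 \<inter> q ` T = {}" "E1 \<inter> q ` T \<noteq> {}" "E2 \<inter> q ` T \<noteq> {}" by blast
      obtain f where f: "f \<in> F" using False by blast
      have FT: "F \<in> q ` T" using f qF T_def by (metis UnI1 image_eqI)
      show False
      proof (cases "F \<in> E1")
        case True
        then have "F \<notin> E2" using E(4) FT by blast
        then have "E2 \<inter> q ` T = {}" using key[of E1 E2] E by blast
        then show False using E(6) by blast
      next
        case False
        then have "E1 \<inter> q ` T = {}" using key[of E2 E1] E by blast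
        then show False using E(5) by blast
      qed
    qed
    have "q ` T \<noteq> {}" using xT by blast
    have hdY: "\<exists>a. q ` T = {a}"
      using hd[unfolded hereditarily_disconnected_space_def Y_def[symmetric], rule_format, of "q ` T"]
        connT \<open>q ` T \<noteq> {}\<close> by simp
    then obtain a where a: "q ` T = {a}" by blast
    obtain f where f: "f \<in> F" using False by blast
    have "q f = a" "q x = a" using a f xT T_def by blast+
    then have "F = {x}" using qF[OF f] qx by simp
    then show False using x by blast
  qed
qed

lemma step2:
  assumes H: "Hausdorff_space X" and Fc: "closedin X F"
    and tdF: "totally_disconnected_space (subtopology X F)"
    and conn: "connectedin (vietoris_compacts X) \<C>"
    and A: "A \<in> \<C>" and B: "B \<in> \<C>"
    and same: "\<And>A'. A' \<in> \<C> \<Longrightarrow> A' - F = A - F"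
    and y: "y \<in> A" "y \<notin> B"
  shows False
proof -
  have CK: "\<C> \<subseteq> Kc X" using conn connectedin_subset_topspace viet_topspace by metis
  then have Ccomp: "\<And>A. A \<in> \<C> \<Longrightarrow> compactin X A" unfolding Kc_def by auto
  have Ctop: "\<And>A. A \<in> \<C> \<Longrightarrow> A \<subseteq> topspace X" using Ccomp compactin_subset_topspace by blast
  have Ccl: "\<And>A. A \<in> \<C> \<Longrightarrow> closedin X A" using H Ccomp compactin_imp_closedin by blast
  have Ftop: "F \<subseteq> topspace X" using Fc closedin_subset by blast
  have yF: "y \<in> F" using same[OF B] y by blast
  define E where "E = A - F"
  define cE where "cE = X closure_of E"
  have cEsub: "\<And>A'. A' \<in> \<C> \<Longrightarrow> cE \<subseteq> A'"
  proof -
    fix A' assume A': "A' \<in> \<C>"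
    have "E \<subseteq> A'" using same[OF A'] unfolding E_def by blast
    then show "cE \<subseteq> A'" unfolding cE_def using Ccl[OF A'] by (intro closure_of_minimal)
  qed
  have Esub: "E \<subseteq> cE" unfolding cE_def E_def
    by (rule closure_of_subset) (use Ctop[OF A] in blast)
  define Z where "Z = subtopology X F"
  have LZ: "compactin Z (F \<inter> B)" unfolding Z_def compactin_subtopology
    using closed_Int_compactin[OF Fc Ccomp[OF B]] by blast
  have yZ: "y \<in> topspace Z" unfolding Z_def using yF Ftop by auto
  obtain W where W: "openin Z W" "closedin Z W" "F \<inter> B \<subseteq> W" "y \<notin> W"
    using td_sep[OF tdF[folded Z_def] LZ yZ] y by blast
  obtain O1 where O1: "openin X O1" "W = O1 \<inter> F" using W(1) unfolding Z_def openin_subtopology by blast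
  have tZ: "topspace Z = F" unfolding Z_def using Ftop by auto
  have "openin Z (F - W)" using W(2) tZ by (metis closedin_def)
  then obtain O2 where O2: "openin X O2" "F - W = O2 \<inter> F" unfolding Z_def openin_subtopology by blast
  have O1m: "z \<in> O1 \<longleftrightarrow> z \<in> W" if "z \<in> F" for z using O1(2) that by blast
  have O2m: "z \<in> O2 \<longleftrightarrow> z \<notin> W" if "z \<in> F" for z
  proof -
    have "z \<in> F - W \<longleftrightarrow> z \<in> O2 \<inter> F" using O2(2) by simp
    then show ?thesis using that by simp
  qed
  show False
  proof (cases "cE \<inter> (F - W) = {}")
    case False
    then obtain z where "z \<in> cE" "z \<in> F" "z \<notin> W" by blast
    then show False using cEsub[OF B] W(3) by blast
  next
    case True
    define U1 where "U1 = {A' \<in> Kc X. A' \<subseteq> O1 \<union> (topspace X - F)}"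
    define U2 where "U2 = {A' \<in> Kc X. A' \<inter> (O2 - cE) \<noteq> {}}"
    have U1o: "openin (vietoris_compacts X) U1" unfolding U1_def
      by (rule viet_upper) (use O1 Fc in blast)
    have U2o: "openin (vietoris_compacts X) U2" unfolding U2_def
      by (rule viet_lower) (use O2 in \<open>auto simp: cE_def\<close>)
    show False
    proof (rule conn_split[OF conn U1o U2o])
      show "\<C> \<subseteq> U1 \<union> U2"
      proof
        fix A' assume A': "A' \<in> \<C>"
        show "A' \<in> U1 \<union> U2"
        proof (cases "A' \<inter> F \<subseteq> W")
          case True
          then have "A' \<subseteq> O1 \<union> (topspace X - F)" using Ctop[OF A'] O1m by blast
          then show ?thesis using A' CK unfolding U1_def by blast
        next
          case False
          then obtain z where z: "z \<in> A'" "z \<in> F" "z \<notin> W" by blast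
          then have "z \<in> O2" "z \<notin> cE" using O2m True by blast+
          then show ?thesis using A' CK z unfolding U2_def by blast
        qed
      qed
      show "U1 \<inter> U2 \<inter> \<C> = {}"
      proof (rule ccontr)
        assume "U1 \<inter> U2 \<inter> \<C> \<noteq> {}"
        then obtain A' z where A': "A' \<in> \<C>" "A' \<subseteq> O1 \<union> (topspace X - F)" "z \<in> A'"
          "z \<in> O2" "z \<notin> cE" unfolding U1_def U2_def by blast
        have "z \<in> F"
        proof (rule ccontr)
          assume "z \<notin> F"
          then have "z \<in> E" using same[OF A'(1)] A'(3) unfolding E_def by blast
          then show False using Esub A'(5) by blast
        qed
        then have "z \<in> W" "z \<notin> W" using A' O1m O2m by blast+
        then show False by blast
      qed
      have "B \<subseteq> O1 \<union> (topspace X - F)" using Ctop[OF B] W(3) O1m by blast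
      then have "B \<in> U1" using B CK unfolding U1_def by blast
      then show "U1 \<inter> \<C> \<noteq> {}" using B by blast
      have "y \<in> O2" "y \<notin> cE" using yF W(4) O2m True by blast+
      then have "A \<in> U2" using A CK y unfolding U2_def by blast
      then show "U2 \<inter> \<C> \<noteq> {}" using A by blast
    qed
  qed
qed

theorem mainTheorem1:
  fixes X :: "'a topology" and F :: "'a set"
  assumes "Hausdorff_space X"
    and "closedin X F"
    and "totally_disconnected_space (subtopology X F)"
    and "totally_disconnected_space (subtopology X (topspace X - F))"
    and "hereditarily_disconnected_space (collapse_space X F)"
  shows "hereditarily_disconnected_space (vietoris_compacts X)"
  unfolding hereditarily_disconnected_space_def
proof (intro allI impI)
  fix \<C> assume h: "connectedin (vietoris_compacts X) \<C> \<and> \<C> \<noteq> {}"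
  then have conn: "connectedin (vietoris_compacts X) \<C>" by blast
  obtain A0 where A0: "A0 \<in> \<C>" using h by blast
  have s1: "x \<in> B" if "A \<in> \<C>" "B \<in> \<C>" "x \<in> A" "x \<notin> F" for A B x
    using step1b[OF assms(1,2,4,5) conn that(2,1,3,4)] .
  have same: "A' - F = A0 - F" if "A' \<in> \<C>" for A'
    using s1[OF that A0] s1[OF A0 that] by blast
  have "B = A0" if B: "B \<in> \<C>" for B
  proof (rule ccontr)
    assume "B \<noteq> A0"
    then obtain y where "(y \<in> A0 \<and> y \<notin> B) \<or> (y \<in> B \<and> y \<notin> A0)" by blast
    then show False
    proof
      assume "y \<in> A0 \<and> y \<notin> B"
      then show False using step2[OF assms(1,2,3) conn A0 B same] by blast
    next
      assume "y \<in> B \<and> y \<notin> A0"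
      moreover have "A' - F = B - F" if "A' \<in> \<C>" for A' using same[OF that] same[OF B] by simp
      ultimately show False using step2[OF assms(1,2,3) conn B A0] by blast
    qed
  qed
  then show "\<exists>a. \<C> = {a}" using A0 by blast
qed

end
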